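(* Let $\Sigma\supseteq\Sigma_m$ be a signature and $E\supseteq\mathrm{Md}$ a set of $\Sigma$-equations such that $(\Sigma,E)$ has the propagation property for pseudo units and the propagation property for pseudo zeros. Then $E$ is a complete axiomatisation of the equational theory of $\mathrm{Mod}_\Sigma(E\cup\mathrm{IL})$: for all $\Sigma$-terms $r,s$, $E\vdash r=s$ (in equational logic) if and only if $r=s$ holds in every $\Sigma$-structure satisfying all equations of $E$ and the inverse law $\mathrm{IL}$.
   Context: $\Sigma_m=(0,1,+,\cdot,-,{}^{-1})$; $\mathrm{Md}$ is the set of equations $(x+y)+z=x+(y+z)$, $x+y=y+x$, $x+0=x$, $x+(-x)=0$, $(x\cdot y)\cdot z=x\cdot(y\cdot z)$, $x\cdot y=y\cdot x$, $1\cdot x=x$, $x\cdot(y+z)=x\cdot y+x\cdot z$, $(x^{-1})^{-1}=x$, $x\cdot(x\cdot x^{-1})=x$. $1_t$ abbreviates $t\cdot t^{-1}$, $0_t$ abbreviates $1+(-1_t)$. The inverse law $\mathrm{IL}$ is the conditional axiom $x\neq 0\rightarrow x\cdot x^{-1}=1$ (universally quantified). $\mathrm{Mod}_\Sigma(E\cup\mathrm{IL})$ is the class of $\Sigma$-structures satisfying $E$ and $\mathrm{IL}$. $(\Sigma,E)$ has the propagation property for pseudo units if for all $\Sigma$-terms $t,r$ and every context $C[\,]$, $E\vdash 1_t\cdot C[r]=1_t\cdot C[1_t\cdot r]$; it has the propagation property for pseudo zeros if for all $\Sigma$-terms $t,r$ and every context $C[\,]$, $E\vdash 0_t\cdot C[r]=0_t\cdot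 C[0_t\cdot r]$. *)

theory Defs
  imports Main
begin

text \<open>Function symbols of a signature Sigma containing Sigma_m = (0,1,+,*,-,inverse):
  the six meadow symbols plus arbitrary extra symbols of type 'f, whose arities are
  given by a function ar.\<close>
datatype 'f sym = SZero | SOne | SAdd | SMul | SNeg | SInv | Ext 'f

fun arity :: "('f \<Rightarrow> nat) \<Rightarrow> 'f sym \<Rightarrow> nat" where
  "arity ar SZero = 0"
| "arity ar SOne = 0"
| "arity ar SAdd = 2"
| "arity ar SMul = 2"
| "arity ar SNeg = 1"
| "arity ar SInv = 1"
| "arity ar (Ext f) = ar f"

datatype 'g trm = Var nat | App 'g "'g trm list"

fun wf :: "('f \<Rightarrow> nat) \<Rightarrow> 'f sym trm \<Rightarrow> bool" where
  "wf ar (Var x) = True"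
| "wf ar (App g ts) = (length ts = arity ar g \<and> (\<forall>t\<in>set ts. wf ar t))"

definition wf_eq :: "('f \<Rightarrow> nat) \<Rightarrow> 'f sym trm \<times> 'f sym trm \<Rightarrow> bool" where
  "wf_eq ar e = (wf ar (fst e) \<and> wf ar (snd e))"

fun subst :: "(nat \<Rightarrow> 'g trm) \<Rightarrow> 'g trm \<Rightarrow> 'g trm" where
  "subst \<sigma> (Var x) = \<sigma> x"
| "subst \<sigma> (App g ts) = App g (map (subst \<sigma>) ts)"

datatype 'g ctxt = Hole | CApp 'g "'g trm list" "'g ctxt" "'g trm list"

fun fill :: "'g ctxt \<Rightarrow> 'g trm \<Rightarrow> 'g trm" where
  "fill Hole t = t"
| "fill (CApp g l C r) t = App g (l @ [fill C t] @ r)"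

fun wf_ctxt :: "('f \<Rightarrow> nat) \<Rightarrow> 'f sym ctxt \<Rightarrow> bool" where
  "wf_ctxt ar Hole = True"
| "wf_ctxt ar (CApp g l C r) =
     (length l + 1 + length r = arity ar g \<and> (\<forall>t\<in>set l. wf ar t) \<and>
      (\<forall>t\<in>set r. wf ar t) \<and> wf_ctxt ar C)"

abbreviation tzero :: "'f sym trm" where "tzero \<equiv> App SZero []"
abbreviation tone :: "'f sym trm" where "tone \<equiv> App SOne []"
abbreviation tadd :: "'f sym trm \<Rightarrow> 'f sym trm \<Rightarrow> 'f sym trm" where "tadd a b \<equiv> App SAdd [a, b]"
abbreviation tmul :: "'f sym trm \<Rightarrow> 'f sym trm \<Rightarrow> 'f sym trm" where "tmul a b \<equiv> App SMul [a, b]"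
abbreviation tneg :: "'f sym trm \<Rightarrow> 'f sym trm" where "tneg a \<equiv> App SNeg [a]"
abbreviation tinv :: "'f sym trm \<Rightarrow> 'f sym trm" where "tinv a \<equiv> App SInv [a]"

definition one_t :: "'f sym trm \<Rightarrow> 'f sym trm" where "one_t t = tmul t (tinv t)"
definition zero_t :: "'f sym trm \<Rightarrow> 'f sym trm" where "zero_t t = tadd tone (tneg (one_t t))"

definition Md :: "('f sym trm \<times> 'f sym trm) set" where
  "Md = (let x = Var 0; y = Var 1; z = Var 2 in
    { (tadd (tadd x y) z, tadd x (tadd y z)),
      (tadd x y, tadd y x),
      (tadd x tzero, x),
      (tadd x (tneg x), tzero),
      (tmul (tmul x y) z, tmul x (tmul y z)),
      (tmul x y, tmul y x),
      (tmul tone x, x),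
      (tmul x (tadd y z), tadd (tmul x y) (tmul x z)),
      (tinv (tinv x), x),
      (tmul x (tmul x (tinv x)), x) })"

inductive eqderiv :: "('f \<Rightarrow> nat) \<Rightarrow> ('f sym trm \<times> 'f sym trm) set \<Rightarrow> 'f sym trm \<Rightarrow> 'f sym trm \<Rightarrow> bool"
  for ar E where
  ax: "(l, r) \<in> E \<Longrightarrow> (\<forall>x. wf ar (\<sigma> x)) \<Longrightarrow> eqderiv ar E (subst \<sigma> l) (subst \<sigma> r)"
| refl: "wf ar t \<Longrightarrow> eqderiv ar E t t"
| sym: "eqderiv ar E t u \<Longrightarrow> eqderiv ar E u t"
| trans: "eqderiv ar E t u \<Longrightarrow> eqderiv ar E u w \<Longrightarrow> eqderiv ar E t w"
| cong: "eqderiv ar E t u \<Longrightarrow> wf_ctxt ar C \<Longrightarrow> eqderiv ar E (fill C t) (fill C u)"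

definition prop_units :: "('f \<Rightarrow> nat) \<Rightarrow> ('f sym trm \<times> 'f sym trm) set \<Rightarrow> bool" where
  "prop_units ar E = (\<forall>t r C. wf ar t \<longrightarrow> wf ar r \<longrightarrow> wf_ctxt ar C \<longrightarrow>
     eqderiv ar E (tmul (one_t t) (fill C r)) (tmul (one_t t) (fill C (tmul (one_t t) r))))"

definition prop_zeros :: "('f \<Rightarrow> nat) \<Rightarrow> ('f sym trm \<times> 'f sym trm) set \<Rightarrow> bool" where
  "prop_zeros ar E = (\<forall>t r C. wf ar t \<longrightarrow> wf ar r \<longrightarrow> wf_ctxt ar C \<longrightarrow>
     eqderiv ar E (tmul (zero_t t) (fill C r)) (tmul (zero_t t) (fill C (tmul (zero_t t) r))))"

fun eval :: "('g \<Rightarrow> 'a list \<Rightarrow> 'a) \<Rightarrow> (nat \<Rightarrow> 'a) \<Rightarrow> 'g trm \<Rightarrow> 'a" where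
  "eval I v (Var x) = v x"
| "eval I v (App g ts) = I g (map (eval I v) ts)"

definition is_struct :: "('f \<Rightarrow> nat) \<Rightarrow> 'a set \<Rightarrow> ('f sym \<Rightarrow> 'a list \<Rightarrow> 'a) \<Rightarrow> bool" where
  "is_struct ar A I = (A \<noteq> {} \<and>
     (\<forall>g xs. length xs = arity ar g \<longrightarrow> set xs \<subseteq> A \<longrightarrow> I g xs \<in> A))"

definition sat_eq :: "'a set \<Rightarrow> ('f sym \<Rightarrow> 'a list \<Rightarrow> 'a) \<Rightarrow> 'f sym trm \<times> 'f sym trm \<Rightarrow> bool" where
  "sat_eq A I e = (\<forall>v. (\<forall>x. v x \<in> A) \<longrightarrow> eval I v (fst e) = eval I v (snd e))"

definition sat_IL :: "'a set \<Rightarrow> ('f sym \<Rightarrow> 'a list \<Rightarrow> 'a) \<Rightarrow> bool" where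
  "sat_IL A I = (\<forall>x\<in>A. x \<noteq> I SZero [] \<longrightarrow> I SMul [x, I SInv [x]] = I SOne [])"

definition model_E_IL :: "('f \<Rightarrow> nat) \<Rightarrow> ('f sym trm \<times> 'f sym trm) set \<Rightarrow> 'a set \<Rightarrow> ('f sym \<Rightarrow> 'a list \<Rightarrow> 'a) \<Rightarrow> bool" where
  "model_E_IL ar E A I = (is_struct ar A I \<and> (\<forall>e\<in>E. sat_eq A I e) \<and> sat_IL A I)"

end

theory Submission
  imports Defs
begin


lemma wf_subst: "wf ar t \<Longrightarrow> (\<forall>x. wf ar (\<sigma> x)) \<Longrightarrow> wf ar (subst \<sigma> t)"
  by (induction t) auto

lemma wf_fill: "wf_ctxt ar C \<Longrightarrow> wf ar t \<Longrightarrow> wf ar (fill C t)"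
  by (induction C) auto

lemma D_wf: "eqderiv ar E a b \<Longrightarrow> \<forall>e\<in>E. wf_eq ar e \<Longrightarrow> wf ar a \<and> wf ar b"
proof (induction rule: eqderiv.induct)
  case (ax l r \<sigma>) then show ?case by (auto simp: wf_eq_def intro!: wf_subst dest!: bspec)
qed (auto intro: wf_fill)

lemma eval_subst: "eval I v (subst \<sigma> t) = eval I (\<lambda>x. eval I v (\<sigma> x)) t"
  by (induction t) (auto cong: map_cong)

lemma eval_in: "is_struct ar A I \<Longrightarrow> \<forall>x. v x \<in> A \<Longrightarrow> wf ar t \<Longrightarrow> eval I v t \<in> A"
proof (induction t)
  case (App g ts)
  then have "length (map (eval I v) ts) = arity ar g" "set (map (eval I v) ts) \<subseteq> A" by auto
  with App(2) show ?case by (simp add: is_struct_def)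
qed auto

lemma eval_fill: "eval I v t = eval I v u \<Longrightarrow> eval I v (fill C t) = eval I v (fill C u)"
  by (induction C) auto

lemma sound:
  assumes "eqderiv ar E a b" "model_E_IL ar E A I" "\<forall>e\<in>E. wf_eq ar e"
  shows "sat_eq A I (a, b)"
  using assms(1)
proof (induction rule: eqderiv.induct)
  case (ax l r \<sigma>)
  show ?case unfolding sat_eq_def
  proof (intro allI impI)
    fix v :: "nat \<Rightarrow> _" assume v: "\<forall>x. v x \<in> A"
    have "\<forall>x. eval I v (\<sigma> x) \<in> A" using ax(2) v assms(2) by (auto simp: model_E_IL_def intro: eval_in)
    then have "eval I (\<lambda>x. eval I v (\<sigma> x)) l = eval I (\<lambda>x. eval I v (\<sigma> x)) r"
      using ax(1) assms(2) by (auto simp: model_E_IL_def sat_eq_def)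
    then show "eval I v (fst (subst \<sigma> l, subst \<sigma> r)) = eval I v (snd (subst \<sigma> l, subst \<sigma> r))"
      by (simp add: eval_subst)
  qed
qed (auto simp: sat_eq_def intro: eval_fill)



definition s3 :: "'g trm \<Rightarrow> 'g trm \<Rightarrow> 'g trm \<Rightarrow> nat \<Rightarrow> 'g trm" where
  "s3 a b c = (\<lambda>n. if n = 0 then a else if n = 1 then b else c)"

locale eqs =
  fixes ar :: "'f \<Rightarrow> nat" and E :: "('f sym trm \<times> 'f sym trm) set"
  assumes wfE: "\<forall>e\<in>E. wf_eq ar e" and MdE: "Md \<subseteq> E"
begin

abbreviation D where "D \<equiv> eqderiv ar E"

lemma Dwf: "D a b \<Longrightarrow> wf ar a \<and> wf ar b" using D_wf wfE by blast

lemma Dsym: "D a b \<Longrightarrow> D b a" by (rule eqderiv.sym)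
lemma Dtrans: "D a b \<Longrightarrow> D b c \<Longrightarrow> D a c" by (rule eqderiv.trans)
lemma Drefl: "wf ar a \<Longrightarrow> D a a" by (rule eqderiv.refl)

lemma Md_inst:
  assumes "(l, r) \<in> Md" "wf ar a" "wf ar b" "wf ar c"
  shows "D (subst (s3 a b c) l) (subst (s3 a b c) r)"
  using assms MdE by (intro eqderiv.ax) (auto simp: s3_def)


lemma add_assoc: "wf ar a \<Longrightarrow> wf ar b \<Longrightarrow> wf ar c \<Longrightarrow> D (tadd (tadd a b) c) (tadd a (tadd b c))"
  using Md_inst[of "tadd (tadd (Var 0) (Var 1)) (Var 2)" "tadd (Var 0) (tadd (Var 1) (Var 2))" a b c] by (simp add: Md_def Let_def s3_def)
lemma add_comm: "wf ar a \<Longrightarrow> wf ar b \<Longrightarrow> D (tadd a b) (tadd b a)"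
  using Md_inst[of "tadd (Var 0) (Var 1)" "tadd (Var 1) (Var 0)" a b a] by (simp add: Md_def Let_def s3_def)
lemma add_zero: "wf ar a \<Longrightarrow> D (tadd a tzero) a"
  using Md_inst[of "tadd (Var 0) tzero" "(Var 0)" a a a] by (simp add: Md_def Let_def s3_def)
lemma add_neg: "wf ar a \<Longrightarrow> D (tadd a (tneg a)) tzero"
  using Md_inst[of "tadd (Var 0) (tneg (Var 0))" "tzero" a a a] by (simp add: Md_def Let_def s3_def)
lemma mul_assoc: "wf ar a \<Longrightarrow> wf ar b \<Longrightarrow> wf ar c \<Longrightarrow> D (tmul (tmul a b) c) (tmul a (tmul b c))"
  using Md_inst[of "tmul (tmul (Var 0) (Var 1)) (Var 2)" "tmul (Var 0) (tmul (Var 1) (Var 2))" a b c] by (simp add: Md_def Let_def s3_def)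
lemma mul_comm: "wf ar a \<Longrightarrow> wf ar b \<Longrightarrow> D (tmul a b) (tmul b a)"
  using Md_inst[of "tmul (Var 0) (Var 1)" "tmul (Var 1) (Var 0)" a b a] by (simp add: Md_def Let_def s3_def)
lemma mul_one: "wf ar a \<Longrightarrow> D (tmul tone a) a"
  using Md_inst[of "tmul tone (Var 0)" "(Var 0)" a a a] by (simp add: Md_def Let_def s3_def)
lemma distr: "wf ar a \<Longrightarrow> wf ar b \<Longrightarrow> wf ar c \<Longrightarrow> D (tmul a (tadd b c)) (tadd (tmul a b) (tmul a c))"
  using Md_inst[of "tmul (Var 0) (tadd (Var 1) (Var 2))" "tadd (tmul (Var 0) (Var 1)) (tmul (Var 0) (Var 2))" a b c] by (simp add: Md_def Let_def s3_def)
lemma mul_inv: "wf ar a \<Longrightarrow> D (tmul a (tmul a (tinv a))) a"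
  using Md_inst[of "tmul (Var 0) (tmul (Var 0) (tinv (Var 0)))" "(Var 0)" a a a] by (simp add: Md_def Let_def s3_def)

lemma cong2:
  assumes "D a a'" "D b b'" "g = SAdd \<or> g = SMul"
  shows "D (App g [a, b]) (App g [a', b'])"
proof -
  have w: "wf ar a" "wf ar a'" "wf ar b" "wf ar b'" using assms Dwf by auto
  have 1: "D (fill (CApp g [] Hole [b]) a) (fill (CApp g [] Hole [b]) a')"
    using assms w by (intro eqderiv.cong) auto
  have 2: "D (fill (CApp g [a'] Hole []) b) (fill (CApp g [a'] Hole []) b')"
    using assms w by (intro eqderiv.cong) auto
  from 1 2 show ?thesis by (auto intro: Dtrans)
qed

lemma cadd: "D a a' \<Longrightarrow> D b b' \<Longrightarrow> D (tadd a b) (tadd a' b')" using cong2 by blast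
lemma cmul: "D a a' \<Longrightarrow> D b b' \<Longrightarrow> D (tmul a b) (tmul a' b')" using cong2 by blast
lemma cneg: "D a a' \<Longrightarrow> D (tneg a) (tneg a')"
  using eqderiv.cong[of ar E a a' "CApp SNeg [] Hole []"] by auto
lemma cinv: "D a a' \<Longrightarrow> D (tinv a) (tinv a')"
  using eqderiv.cong[of ar E a a' "CApp SInv [] Hole []"] by auto

lemma wf_simps: "wf ar tzero" "wf ar tone" "wf ar (tadd a b) = (wf ar a \<and> wf ar b)"
  "wf ar (tmul a b) = (wf ar a \<and> wf ar b)" "wf ar (tneg a) = wf ar a" "wf ar (tinv a) = wf ar a"
  "wf ar (one_t a) = wf ar a" "wf ar (zero_t a) = wf ar a"
  by (auto simp: one_t_def zero_t_def)

end


context eqs begin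

declare Dtrans[trans]
lemmas ws = wf_simps

lemma mul_one_r: "wf ar a \<Longrightarrow> D (tmul a tone) a"
  by (meson Dtrans mul_comm mul_one ws(2))

lemma mul_zero: assumes "wf ar a" shows "D (tmul a tzero) tzero"
proof -
  have w: "wf ar (tmul a tzero)" using assms by (simp add: ws)
  have "D (tmul a tzero) (tadd (tmul a tzero) tzero)" using w by (intro Dsym[OF add_zero])
  also have "D ... (tadd (tmul a tzero) (tadd (tmul a tzero) (tneg (tmul a tzero))))"
    using w by (intro cadd Drefl Dsym[OF add_neg])
  also have "D ... (tadd (tadd (tmul a tzero) (tmul a tzero)) (tneg (tmul a tzero)))"
    using w by (intro Dsym[OF add_assoc]) (auto simp: ws)
  also have "D ... (tadd (tmul a (tadd tzero tzero)) (tneg (tmul a tzero)))"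
    using w assms by (intro cadd Drefl Dsym[OF distr]) (auto simp: ws)
  also have "D ... (tadd (tmul a tzero) (tneg (tmul a tzero)))"
    using w assms by (intro cadd cmul Drefl add_zero) (auto simp: ws)
  also have "D ... tzero" using w by (intro add_neg)
  finally show ?thesis .
qed

lemma mul_neg: assumes "wf ar a" "wf ar b" shows "D (tmul a (tneg b)) (tneg (tmul a b))"
proof -
  let ?p = "tmul a b" and ?q = "tmul a (tneg b)"
  have w: "wf ar ?p" "wf ar ?q" using assms by (auto simp: ws)
  have "D ?q (tadd ?q tzero)" using w by (intro Dsym[OF add_zero])
  also have "D ... (tadd ?q (tadd ?p (tneg ?p)))" using w by (intro cadd Drefl Dsym[OF add_neg])
  also have "D ... (tadd (tadd ?q ?p) (tneg ?p))" using w by (intro Dsym[OF add_assoc]) (auto simp: ws)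
  also have "D ... (tadd (tadd ?p ?q) (tneg ?p))" using w by (intro cadd Drefl add_comm) (auto simp: ws)
  also have "D ... (tadd (tmul a (tadd b (tneg b))) (tneg ?p))"
    using w assms by (intro cadd Drefl Dsym[OF distr]) (auto simp: ws)
  also have "D ... (tadd (tmul a tzero) (tneg ?p))"
    using w assms by (intro cadd cmul Drefl add_neg) (auto simp: ws)
  also have "D ... (tadd tzero (tneg ?p))"
    using w assms by (intro cadd Drefl mul_zero) (auto simp: ws)
  also have "D ... (tadd (tneg ?p) tzero)" using w by (intro add_comm) (auto simp: ws)
  also have "D ... (tneg ?p)" using w by (intro add_zero) (auto simp: ws)
  finally show ?thesis .
qed

lemma ut_sq: assumes "wf ar t" shows "D (tmul (one_t t) (one_t t)) (tmul (one_t t) tone)"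
proof -
  let ?u = "tmul t (tinv t)"
  have w: "wf ar ?u" "wf ar (tinv t)" using assms by (auto simp: ws)
  have "D (tmul ?u ?u) (tmul t (tmul (tinv t) ?u))" using w assms by (intro mul_assoc) auto
  also have "D ... (tmul t (tmul ?u (tinv t)))" using w assms by (intro cmul Drefl mul_comm) auto
  also have "D ... (tmul (tmul t ?u) (tinv t))" using w assms by (intro Dsym[OF mul_assoc]) auto
  also have "D ... ?u" using w assms by (intro cmul Drefl mul_inv) auto
  also have "D ... (tmul ?u tone)" using w by (intro Dsym[OF mul_one_r])
  finally show ?thesis unfolding one_t_def .
qed

lemma zt_t: assumes "wf ar t" shows "D (tmul (zero_t t) t) (tmul (zero_t t) tzero)"
proof -
  let ?u = "tmul t (tinv t)"
  let ?z = "tadd tone (tneg ?u)"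
  have w: "wf ar ?u" "wf ar ?z" using assms by (auto simp: ws)
  have "D (tmul ?z t) (tmul t ?z)" using w assms by (intro mul_comm) auto
  also have "D ... (tadd (tmul t tone) (tmul t (tneg ?u)))" using w assms by (intro distr) (auto simp: ws)
  also have "D ... (tadd t (tneg (tmul t ?u)))" using w assms by (intro cadd mul_one_r mul_neg) auto
  also have "D ... (tadd t (tneg t))" using w assms by (intro cadd Drefl cneg mul_inv) auto
  also have "D ... tzero" using assms by (intro add_neg)
  also have "D ... (tmul ?z tzero)" using w by (intro Dsym[OF mul_zero])
  finally show ?thesis unfolding one_t_def zero_t_def .
qed

lemma decomp: assumes "wf ar t" "wf ar r"
  shows "D (tadd (tmul (one_t t) r) (tmul (zero_t t) r)) r"
proof -
  let ?u = "tmul t (tinv t)"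
  let ?z = "tadd tone (tneg ?u)"
  have w: "wf ar ?u" "wf ar ?z" using assms by (auto simp: ws)
  have X: "D (tadd ?u ?z) tone"
  proof -
    have "D (tadd ?u ?z) (tadd ?z ?u)" using w by (intro add_comm)
    also have "D ... (tadd tone (tadd (tneg ?u) ?u))" using w by (intro add_assoc) (auto simp: ws)
    also have "D ... (tadd tone (tadd ?u (tneg ?u)))" using w by (intro cadd Drefl add_comm) (auto simp: ws)
    also have "D ... (tadd tone tzero)" using w by (intro cadd Drefl add_neg) (auto simp: ws)
    also have "D ... tone" by (intro add_zero) (auto simp: ws)
    finally show ?thesis .
  qed
  have "D (tadd (tmul ?u r) (tmul ?z r)) (tadd (tmul r ?u) (tmul r ?z))"
    using w assms by (intro cadd mul_comm) auto
  also have "D ... (tmul r (tadd ?u ?z))" using w assms by (intro Dsym[OF distr]) auto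
  also have "D ... (tmul r tone)" using w assms X by (intro cmul Drefl) auto
  also have "D ... r" using assms by (intro mul_one_r)
  finally show ?thesis unfolding one_t_def zero_t_def .
qed

end


context eqs begin

definition good :: "('f sym trm \<times> 'f sym trm) set \<Rightarrow> bool" where
  "good R = ({(a,b). D a b} \<subseteq> R \<and> R \<subseteq> {(a,b). wf ar a \<and> wf ar b} \<and> sym R \<and> trans R \<and>
     (\<forall>a b C. (a,b) \<in> R \<longrightarrow> wf_ctxt ar C \<longrightarrow> (fill C a, fill C b) \<in> R))"

lemma goodD: "good R \<Longrightarrow> D a b \<Longrightarrow> (a,b) \<in> R" by (auto simp: good_def)
lemma goodW: "good R \<Longrightarrow> (a,b) \<in> R \<Longrightarrow> wf ar a \<and> wf ar b" by (auto simp: good_def)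
lemma goodS: "good R \<Longrightarrow> (a,b) \<in> R \<Longrightarrow> (b,a) \<in> R" by (auto simp: good_def sym_def)
lemma goodT: "good R \<Longrightarrow> (a,b) \<in> R \<Longrightarrow> (b,c) \<in> R \<Longrightarrow> (a,c) \<in> R"
  unfolding good_def trans_def by blast
lemma goodC: "good R \<Longrightarrow> (a,b) \<in> R \<Longrightarrow> wf_ctxt ar C \<Longrightarrow> (fill C a, fill C b) \<in> R"
  by (auto simp: good_def)
lemma goodR: "good R \<Longrightarrow> wf ar a \<Longrightarrow> (a,a) \<in> R" using goodD Drefl by blast

lemma good_D: "good {(a,b). D a b}"
  unfolding good_def sym_def trans_def
  by (auto intro: Dwf[THEN conjunct1] Dwf[THEN conjunct2] Dsym Dtrans eqderiv.cong)

lemma good_list: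
  assumes g: "good R"
  shows "list_all2 (\<lambda>a b. (a,b) \<in> R) xs ys \<Longrightarrow> \<forall>t\<in>set l. wf ar t \<Longrightarrow>
    length l + length xs = arity ar f \<Longrightarrow> (App f (l @ xs), App f (l @ ys)) \<in> R"
proof (induction xs arbitrary: l ys)
  case Nil
  then show ?case using g by (auto intro!: goodR)
next
  case (Cons x xs)
  then obtain y ys' where ys: "ys = y # ys'" and xy: "(x,y) \<in> R" and r: "list_all2 (\<lambda>a b. (a,b) \<in> R) xs ys'"
    by (cases ys) auto
  have wxs: "\<forall>t\<in>set xs. wf ar t" using r g by (auto simp: list_all2_conv_all_nth in_set_conv_nth) (metis goodW)
  have wy: "wf ar y" using xy g goodW by blast
  have 1: "(fill (CApp f l Hole xs) x, fill (CApp f l Hole xs) y) \<in> R"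
    using Cons.prems wxs xy g by (intro goodC) auto
  have 2: "(App f ((l @ [y]) @ xs), App f ((l @ [y]) @ ys')) \<in> R"
    using Cons.prems wy r by (intro Cons.IH) auto
  from 1 2 show ?case using ys g by (auto intro: goodT)
qed

lemma good_mult:
  assumes g: "good M" and wp: "wf ar p"
    and pr: "\<forall>a C. wf ar a \<longrightarrow> wf_ctxt ar C \<longrightarrow> D (tmul p (fill C a)) (tmul p (fill C (tmul p a)))"
  shows "good {(a,b). wf ar a \<and> wf ar b \<and> (tmul p a, tmul p b) \<in> M}"
    and "M \<subseteq> {(a,b). wf ar a \<and> wf ar b \<and> (tmul p a, tmul p b) \<in> M}"
proof -
  have ctx: "(tmul p a, tmul p b) \<in> M" if "(a,b) \<in> M" for a b
    using goodC[OF g that, of "CApp SMul [p] Hole []"] wp by simp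
  show "M \<subseteq> {(a,b). wf ar a \<and> wf ar b \<and> (tmul p a, tmul p b) \<in> M}"
    using ctx g goodW by auto
  have cc: "(tmul p (fill C a), tmul p (fill C b)) \<in> M"
    if ab: "wf ar a" "wf ar b" "(tmul p a, tmul p b) \<in> M" and C: "wf_ctxt ar C" for a b C
  proof -
    have 1: "(tmul p (fill C a), tmul p (fill C (tmul p a))) \<in> M" using pr ab C g goodD by blast
    have 2: "(tmul p (fill C b), tmul p (fill C (tmul p b))) \<in> M" using pr ab C g goodD by blast
    have 3: "(tmul p (fill C (tmul p a)), tmul p (fill C (tmul p b))) \<in> M"
      using goodC[OF g ab(3), of "CApp SMul [p] C []"] wp C by simp
    show ?thesis using 1 2 3 g goodS goodT by blast
  qed
  show "good {(a,b). wf ar a \<and> wf ar b \<and> (tmul p a, tmul p b) \<in> M}"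
    unfolding good_def
  proof (intro conjI allI impI)
    show "{(a,b). D a b} \<subseteq> {(a,b). wf ar a \<and> wf ar b \<and> (tmul p a, tmul p b) \<in> M}"
      using Dwf wp g goodD cmul Drefl by blast
    show "sym {(a,b). wf ar a \<and> wf ar b \<and> (tmul p a, tmul p b) \<in> M}"
      using g goodS unfolding sym_def by blast
    show "trans {(a,b). wf ar a \<and> wf ar b \<and> (tmul p a, tmul p b) \<in> M}"
      using g goodT unfolding trans_def by blast
  qed (use cc wf_fill in auto)
qed

lemma maximal_IL:
  assumes g: "good M" and rs: "(r,s) \<notin> M"
    and max: "\<forall>X. good X \<and> (r,s) \<notin> X \<longrightarrow> M \<subseteq> X \<longrightarrow> X = M"
    and pu: "prop_units ar E" and pz: "prop_zeros ar E"
    and wr: "wf ar r" and ws: "wf ar s"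
    and wt: "wf ar t" and t0: "(t, tzero) \<notin> M"
  shows "(one_t t, tone) \<in> M"
proof (rule ccontr)
  assume u1: "(one_t t, tone) \<notin> M"
  let ?R1 = "{(a,b). wf ar a \<and> wf ar b \<and> (tmul (one_t t) a, tmul (one_t t) b) \<in> M}"
  let ?R2 = "{(a,b). wf ar a \<and> wf ar b \<and> (tmul (zero_t t) a, tmul (zero_t t) b) \<in> M}"
  have wu: "wf ar (one_t t)" "wf ar (zero_t t)" using wt by (auto simp: wf_simps)
  have g1: "good ?R1" "M \<subseteq> ?R1"
    using good_mult[OF g wu(1)] pu wt unfolding prop_units_def by auto
  have g2: "good ?R2" "M \<subseteq> ?R2"
    using good_mult[OF g wu(2)] pz wt unfolding prop_zeros_def by auto
  have "(one_t t, tone) \<in> ?R1" using ut_sq[OF wt] g goodD wu by auto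
  then have "?R1 \<noteq> M" using u1 by auto
  then have r1: "(r,s) \<in> ?R1" using max g1 by blast
  have "(t, tzero) \<in> ?R2" using zt_t[OF wt] g goodD wt by auto
  then have "?R2 \<noteq> M" using t0 by auto
  then have r2: "(r,s) \<in> ?R2" using max g2 by blast
  let ?a = "tmul (one_t t) r" and ?b = "tmul (zero_t t) r"
  let ?a' = "tmul (one_t t) s" and ?b' = "tmul (zero_t t) s"
  have 1: "(tadd ?a ?b, tadd ?a' ?b) \<in> M"
    using goodC[OF g _, of ?a ?a' "CApp SAdd [] Hole [?b]"] r1 wu wr by simp
  have 2: "(tadd ?a' ?b, tadd ?a' ?b') \<in> M"
    using goodC[OF g _, of ?b ?b' "CApp SAdd [?a'] Hole []"] r2 wu ws by simp
  have 3: "(r, tadd ?a ?b) \<in> M" using decomp[OF wt wr] g goodD Dsym by blast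
  have 4: "(tadd ?a' ?b', s) \<in> M" using decomp[OF wt ws] g goodD by blast
  have "(r,s) \<in> M" using 1 2 3 4 g goodT by meson
  with rs show False by simp
qed

end


lemma subst_Var: "subst Var t = t"
  by (induction t) (auto intro: map_idI)

context eqs begin

definition qA :: "_ \<Rightarrow> ('f sym trm set \<Rightarrow> 'a) \<Rightarrow> 'a set" where
  "qA R h = (\<lambda>t. h (R``{t})) ` {t. wf ar t}"
definition qrep where "qrep R h x = (SOME t. wf ar t \<and> h (R``{t}) = x)"
definition qI where "qI R h g xs = h (R``{App g (map (qrep R h) xs)})"

lemma cls_eq: "good R \<Longrightarrow> wf ar a \<Longrightarrow> wf ar b \<Longrightarrow> (R``{a} = R``{b}) \<longleftrightarrow> (a,b) \<in> R"
proof
  assume g: "good R" "wf ar a" "wf ar b" "R``{a} = R``{b}"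
  have "(b,b) \<in> R" using g goodR by blast
  then have "(a,b) \<in> R" using g(4) by blast
  then show "(a,b) \<in> R" .
next
  assume g: "good R" "wf ar a" "wf ar b" "(a,b) \<in> R"
  show "R``{a} = R``{b}" using g goodS goodT by blast
qed

lemma qrep:
  assumes g: "good R" and h: "inj h" and u: "wf ar u"
  shows "wf ar (qrep R h (h (R``{u}))) \<and> (qrep R h (h (R``{u})), u) \<in> R"
proof -
  have "\<exists>t. wf ar t \<and> h (R``{t}) = h (R``{u})" using u by blast
  then have 1: "wf ar (qrep R h (h (R``{u}))) \<and> h (R``{qrep R h (h (R``{u}))}) = h (R``{u})"
    unfolding qrep_def by (rule someI_ex)
  then have "R``{qrep R h (h (R``{u}))} = R``{u}" using h by (auto dest: injD)
  then show ?thesis using 1 cls_eq[OF g _ u] by blast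
qed

lemma qeval:
  assumes g: "good R" and h: "inj h" and s: "\<forall>x. wf ar (\<sigma> x) \<and> v x = h (R``{\<sigma> x})"
  shows "wf ar t \<Longrightarrow> eval (qI R h) v t = h (R``{subst \<sigma> t})"
proof (induction t)
  case (Var x)
  then show ?case using s by simp
next
  case (App f ts)
  have ih: "eval (qI R h) v ti = h (R``{subst \<sigma> ti})" if "ti \<in> set ts" for ti
    using App that by auto
  have wts: "wf ar (subst \<sigma> ti)" if "ti \<in> set ts" for ti
    using App that s by (auto intro: wf_subst)
  have la: "list_all2 (\<lambda>a b. (a,b) \<in> R) (map (qrep R h) (map (eval (qI R h) v) ts)) (map (subst \<sigma>) ts)"
    using qrep[OF g h] ih wts by (auto simp: list_all2_conv_all_nth)
  have "(App f ([] @ map (qrep R h) (map (eval (qI R h) v) ts)), App f ([] @ map (subst \<sigma>) ts)) \<in> R"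
    using App.prems by (intro good_list[OF g la]) auto
  then have 1: "(App f (map (qrep R h) (map (eval (qI R h) v) ts)), App f (map (subst \<sigma>) ts)) \<in> R" by simp
  moreover have "wf ar (App f (map (qrep R h) (map (eval (qI R h) v) ts)))"
    using g 1 goodW by blast
  moreover have "wf ar (subst \<sigma> (App f ts))" using App.prems s by (intro wf_subst) auto
  ultimately have "R``{App f (map (qrep R h) (map (eval (qI R h) v) ts))} = R``{subst \<sigma> (App f ts)}"
    using cls_eq[OF g] by simp
  then show ?case by (simp add: qI_def[of R h f])
qed

lemma q_struct: assumes g: "good R" and h: "inj h" shows "is_struct ar (qA R h) (qI R h)"
  unfolding is_struct_def
proof (intro conjI allI impI)
  show "qA R h \<noteq> {}" unfolding qA_def by (auto intro: exI[of _ "Var 0"])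
  fix f xs assume l: "length xs = arity ar f" and xs: "set xs \<subseteq> qA R h"
  have "\<forall>x\<in>set xs. wf ar (qrep R h x)" using xs qrep[OF g h] unfolding qA_def by auto
  then have "wf ar (App f (map (qrep R h) xs))" using l by auto
  then show "qI R h f xs \<in> qA R h" unfolding qI_def qA_def by blast
qed

lemma q_val:
  assumes g: "good R" and h: "inj h" and v: "\<forall>x. v x \<in> qA R h"
  shows "\<forall>x. wf ar (qrep R h (v x)) \<and> v x = h (R``{qrep R h (v x)})"
proof
  fix x
  obtain u where u: "wf ar u" "v x = h (R``{u})" using v unfolding qA_def by blast
  have "(qrep R h (v x), u) \<in> R" "wf ar (qrep R h (v x))" using qrep[OF g h u(1)] u by auto
  then have "R``{qrep R h (v x)} = R``{u}" using u cls_eq[OF g] by blast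
  then show "wf ar (qrep R h (v x)) \<and> v x = h (R``{qrep R h (v x)})"
    using u \<open>wf ar (qrep R h (v x))\<close> by simp
qed

lemma q_satE: assumes g: "good R" and h: "inj h" and e: "e \<in> E" shows "sat_eq (qA R h) (qI R h) e"
  unfolding sat_eq_def
proof (intro allI impI)
  fix v :: "nat \<Rightarrow> 'a" assume v: "\<forall>x. v x \<in> qA R h"
  obtain l r where lr: "e = (l, r)" by (cases e)
  have w: "wf ar l" "wf ar r" using wfE e lr by (auto simp: wf_eq_def)
  let ?\<sigma> = "\<lambda>x. qrep R h (v x)"
  have s: "\<forall>x. wf ar (?\<sigma> x) \<and> v x = h (R``{?\<sigma> x})" using q_val[OF g h v] .
  have "D (subst ?\<sigma> l) (subst ?\<sigma> r)" using e lr s by (intro eqderiv.ax) auto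
  then have "(subst ?\<sigma> l, subst ?\<sigma> r) \<in> R" using g goodD by blast
  then have "R``{subst ?\<sigma> l} = R``{subst ?\<sigma> r}" using cls_eq[OF g] g goodW by blast
  then show "eval (qI R h) v (fst e) = eval (qI R h) v (snd e)"
    using qeval[OF g h s] w lr by simp
qed

end


theorem theorem2:
  fixes ar :: "'f \<Rightarrow> nat"
    and E :: "('f sym trm \<times> 'f sym trm) set"
    and r s :: "'f sym trm"
  assumes "\<forall>e\<in>E. wf_eq ar e"
    and "Md \<subseteq> E"
    and "prop_units ar E"
    and "prop_zeros ar E"
    and "wf ar r" and "wf ar s"
    and "\<exists>h :: 'f sym trm set \<Rightarrow> 'a. inj h"
  shows "eqderiv ar E r s \<longleftrightarrow>
         (\<forall>(A :: 'a set) I. model_E_IL ar E A I \<longrightarrow> sat_eq A I (r, s))"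
proof
  assume "eqderiv ar E r s"
  then show "\<forall>(A :: 'a set) I. model_E_IL ar E A I \<longrightarrow> sat_eq A I (r, s)"
    using sound assms(1) by blast
next
  assume H: "\<forall>(A :: 'a set) I. model_E_IL ar E A I \<longrightarrow> sat_eq A I (r, s)"
  show "eqderiv ar E r s"
  proof (rule ccontr)
    assume nd: "\<not> eqderiv ar E r s"
    interpret eqs ar E using assms(1,2) by unfold_locales
    obtain h :: "'f sym trm set \<Rightarrow> 'a" where h: "inj h" using assms(7) by blast
    let ?G = "{R. good R \<and> (r,s) \<notin> R}"
    have "\<exists>M\<in>?G. \<forall>X\<in>?G. M \<subseteq> X \<longrightarrow> X = M"
    proof (rule subset_Zorn_nonempty)
      show "?G \<noteq> {}" using good_D nd by blast
    next
      fix C assume C: "C \<noteq> {}" "subset.chain ?G C"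
      have CG: "\<And>X. X \<in> C \<Longrightarrow> good X \<and> (r,s) \<notin> X" using C(2) by (auto simp: subset_chain_def)
      have ch: "\<And>X Y. X \<in> C \<Longrightarrow> Y \<in> C \<Longrightarrow> X \<subseteq> Y \<or> Y \<subseteq> X" using C(2) by (auto simp: subset_chain_def)
      obtain X0 where X0: "X0 \<in> C" using C(1) by blast
      have "good (\<Union>C)" unfolding good_def
      proof (intro conjI)
        show "{(a,b). D a b} \<subseteq> \<Union>C" using X0 CG goodD by blast
        show "\<Union>C \<subseteq> {(a,b). wf ar a \<and> wf ar b}" using CG goodW by blast
        show "sym (\<Union>C)" unfolding sym_def using CG goodS by blast
        show "trans (\<Union>C)" unfolding trans_def
        proof (intro allI impI)
          fix a b c assume "(a,b) \<in> \<Union>C" "(b,c) \<in> \<Union>C"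
          then obtain X Y where XY: "X \<in> C" "Y \<in> C" "(a,b) \<in> X" "(b,c) \<in> Y" by blast
          show "(a,c) \<in> \<Union>C"
          proof (cases "X \<subseteq> Y")
            case True then show ?thesis using XY CG goodT by blast
          next
            case False then have "Y \<subseteq> X" using ch XY by blast
            then show ?thesis using XY CG goodT by blast
          qed
        qed
        show "\<forall>a b C'. (a,b) \<in> \<Union>C \<longrightarrow> wf_ctxt ar C' \<longrightarrow> (fill C' a, fill C' b) \<in> \<Union>C"
          using CG goodC by blast
      qed
      moreover have "(r,s) \<notin> \<Union>C" using CG by blast
      ultimately show "\<Union>C \<in> ?G" by blast
    qed
    then obtain M where g: "good M" and rs: "(r,s) \<notin> M"
      and max: "\<forall>X. good X \<and> (r,s) \<notin> X \<longrightarrow> M \<subseteq> X \<longrightarrow> X = M" by blast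
    have IL: "sat_IL (qA M h) (qI M h)"
      unfolding sat_IL_def
    proof (intro ballI impI)
      fix x assume x: "x \<in> qA M h" and x0: "x \<noteq> qI M h SZero []"
      obtain t where t: "wf ar t" "x = h (M``{t})" using x unfolding qA_def by blast
      have "qI M h SZero [] = h (M``{tzero})" by (simp add: qI_def)
      then have "(t, tzero) \<notin> M" using x0 t cls_eq[OF g t(1), of tzero] by auto
      then have u: "(one_t t, tone) \<in> M"
        using maximal_IL[OF g rs max assms(3,4,5,6) t(1)] by blast
      have s: "\<forall>n. wf ar ((\<lambda>_. t) n) \<and> (\<lambda>_. x) n = h (M``{(\<lambda>_. t) n})" using t by simp
      have "qI M h SMul [x, qI M h SInv [x]] = eval (qI M h) (\<lambda>_. x) (one_t (Var 0))"
        by (simp add: one_t_def)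
      also have "... = h (M``{subst (\<lambda>_. t) (one_t (Var 0))})"
        by (rule qeval[OF g h s]) (simp add: one_t_def)
      also have "subst (\<lambda>_. t) (one_t (Var 0)) = one_t t" by (simp add: one_t_def)
      also have "M``{one_t t} = M``{tone}"
        using cls_eq[OF g, of "one_t t" tone] u t(1) by (simp add: wf_simps)
      also have "h (M``{tone}) = qI M h SOne []" by (simp add: qI_def)
      finally show "qI M h SMul [x, qI M h SInv [x]] = qI M h SOne []" .
    qed
    have "model_E_IL ar E (qA M h) (qI M h)"
      unfolding model_E_IL_def using q_struct[OF g h] q_satE[OF g h] IL by blast
    then have sat: "sat_eq (qA M h) (qI M h) (r, s)" using H by blast
    let ?v = "\<lambda>x. h (M``{Var x})"
    have vA: "\<forall>x. ?v x \<in> qA M h" unfolding qA_def by auto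
    have s: "\<forall>x. wf ar (Var x) \<and> ?v x = h (M``{Var x})" by simp
    have "eval (qI M h) ?v r = eval (qI M h) ?v s" using sat vA unfolding sat_eq_def by auto
    then have "h (M``{r}) = h (M``{s})"
      using qeval[OF g h s assms(5)] qeval[OF g h s assms(6)] by (simp add: subst_Var)
    then have "M``{r} = M``{s}" using h by (auto dest: injD)
    then have "(r,s) \<in> M" using cls_eq[OF g assms(5,6)] by simp
    with rs show False by simp
  qed
qed


end
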